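(* Let $(N,v)$ be a TU game with $\Pi(v)\neq\emptyset$. Then for all $(\mathbf{a},\mathcal{C})\in\Upsilon(v)$ and $(\mathbf{x},\rho)\in\Pi(v)$, $U_{\mathbf{a},\mathbf{x}}\cap F(\mathcal{C})\neq\emptyset$, i.e., there exists a player $i$ belonging to no set of $\mathcal{C}$ with $a_i>x_i$.
   Context: A TU game is a pair $(N,v)$ with $N=\{1,\dots,n\}$ and $v:2^N\to\mathbb{R}$, $v(\emptyset)=0$. $\mathcal{P}(N)$ denotes the set of partitions of $N$. A core solution is a pair $(\mathbf{x},\rho)$ with $\mathbf{x}\in\mathbb{R}^n$, $\rho\in\mathcal{P}(N)$, such that $\sum_{i\in S}x_i\ge v(S)$ for all $S\subseteq N$ and $\sum_{i\in S}x_i=v(S)$ for all $S\in\rho$; $\Pi(v)$ is the set of core solutions. $K_v=\max_{\rho\in\mathcal{P}(N)}\sum_{S\in\rho}v(S)$. A feasible environment state is a pair $(\mathbf{a},\mathcal{C})$ with $\mathbf{a}\in\mathbb{R}^n$ and $\mathcal{C}$ a set of pairwise disjoint subsets of $N$ such that $a_i\ge v(\{i\})$ for all $i\in N$ and $\sum_{i\in S}a_i\le v(S)$ for all $S\in\mathcal{C}$; $\Omega(v)$ is the set of feasible environment states. $\Upsilon(v)=\{(\mathbf{a},\mathcal{C})\in\Omega(v):\sum_{i\in N}a_i>K_v,\ \sum_{i\in S}a_i\ge v(S)\ \forall S\subseteq N\}$. For $\mathbf{a},\mathbf{x}\in\mathbb{R}^n$, $U_{\mathbf{a},\mathbf{x}}=\{i:a_i>x_i\}$.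 The banded set is $B(\mathcal{C})=\{i:\exists S\in\mathcal{C},\ i\in S\}$ and the free set is $F(\mathcal{C})=N\setminus B(\mathcal{C})$. *)

theory Defs
  imports Complex_Main "HOL-Library.Disjoint_Sets"
begin

text \<open>Players are N = {1..n}; a game is v :: nat set => real with v {} = 0.
  Payoff vectors are functions nat => real (only values on N matter).\<close>

definition players :: "nat \<Rightarrow> nat set" where
  "players n = {1..n}"

definition partitions :: "nat \<Rightarrow> nat set set set" where
  "partitions n = {\<rho>. partition_on (players n) \<rho>}"

definition core_solutions :: "nat \<Rightarrow> (nat set \<Rightarrow> real) \<Rightarrow> ((nat \<Rightarrow> real) \<times> nat set set) set" where
  "core_solutions n v = {(x, \<rho>). \<rho> \<in> partitions n \<and>
      (\<forall>S. S \<subseteq> players n \<longrightarrow> (\<Sum>i\<in>S. x i) \<ge> v S) \<and>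
      (\<forall>S\<in>\<rho>. (\<Sum>i\<in>S. x i) = v S)}"

definition K_val :: "nat \<Rightarrow> (nat set \<Rightarrow> real) \<Rightarrow> real" where
  "K_val n v = Max ((\<lambda>\<rho>. \<Sum>S\<in>\<rho>. v S) ` partitions n)"

definition feasible_states :: "nat \<Rightarrow> (nat set \<Rightarrow> real) \<Rightarrow> ((nat \<Rightarrow> real) \<times> nat set set) set" where
  "feasible_states n v = {(a, C). (\<forall>S\<in>C. S \<subseteq> players n) \<and> disjoint C \<and>
      (\<forall>i\<in>players n. a i \<ge> v {i}) \<and>
      (\<forall>S\<in>C. (\<Sum>i\<in>S. a i) \<le> v S)}"

definition Upsilon :: "nat \<Rightarrow> (nat set \<Rightarrow> real) \<Rightarrow> ((nat \<Rightarrow> real) \<times> nat set set) set" where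
  "Upsilon n v = {(a, C) \<in> feasible_states n v.
      (\<Sum>i\<in>players n. a i) > K_val n v \<and>
      (\<forall>S. S \<subseteq> players n \<longrightarrow> (\<Sum>i\<in>S. a i) \<ge> v S)}"

definition U_set :: "nat \<Rightarrow> (nat \<Rightarrow> real) \<Rightarrow> (nat \<Rightarrow> real) \<Rightarrow> nat set" where
  "U_set n a x = {i \<in> players n. a i > x i}"

definition banded :: "nat set set \<Rightarrow> nat set" where
  "banded C = {i. \<exists>S\<in>C. i \<in> S}"

definition free_set :: "nat \<Rightarrow> nat set set \<Rightarrow> nat set" where
  "free_set n C = players n - banded C"

end

theory Submission
  imports Defs
begin

theorem proposition9:
  fixes n :: nat and v :: "nat set \<Rightarrow> real"
  assumes "v {} = 0"
    and "core_solutions n v \<noteq> {}"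
    and "(a, C) \<in> Upsilon n v"
    and "(x, \<rho>) \<in> core_solutions n v"
  shows "U_set n a x \<inter> free_set n C \<noteq> {}"
proof
  assume H: "U_set n a x \<inter> free_set n C = {}"
  let ?N = "players n"
  have finN: "finite ?N" by (simp add: players_def)
  from assms(3) have CN: "\<forall>S\<in>C. S \<subseteq> ?N" and dC: "disjoint C"
    and Cle: "\<forall>S\<in>C. (\<Sum>i\<in>S. a i) \<le> v S"
    and aK: "(\<Sum>i\<in>?N. a i) > K_val n v"
    by (auto simp: Upsilon_def feasible_states_def)
  from assms(4) have rp: "\<rho> \<in> partitions n"
    and xge: "\<forall>S. S \<subseteq> ?N \<longrightarrow> (\<Sum>i\<in>S. x i) \<ge> v S"
    and xeq: "\<forall>S\<in>\<rho>. (\<Sum>i\<in>S. x i) = v S"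
    by (auto simp: core_solutions_def)
  have "C \<subseteq> Pow ?N" using CN by blast
  then have finC: "finite C" using finN finite_subset by blast
  have BN: "\<Union>C \<subseteq> ?N" using CN by blast
  have finB: "finite (\<Union>C)" using BN finN finite_subset by blast
  have free: "free_set n C = ?N - \<Union>C" by (auto simp: free_set_def banded_def)
  have split: "\<And>f::nat \<Rightarrow> real. (\<Sum>i\<in>?N. f i) = (\<Sum>i\<in>?N - \<Union>C. f i) + (\<Sum>S\<in>C. \<Sum>i\<in>S. f i)"
  proof -
    fix f :: "nat \<Rightarrow> real"
    have "(\<Sum>i\<in>?N. f i) = (\<Sum>i\<in>?N - \<Union>C. f i) + (\<Sum>i\<in>\<Union>C. f i)"
      using sum.subset_diff[OF BN finN] by simp
    moreover have "(\<Sum>i\<in>\<Union>C. f i) = (\<Sum>S\<in>C. \<Sum>i\<in>S. f i)"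
    proof -
      have A: "\<forall>A\<in>C. finite A" using CN finN finite_subset by blast
      have B: "\<forall>A\<in>C. \<forall>B\<in>C. A \<noteq> B \<longrightarrow> A \<inter> B = {}" using dC by (simp add: disjoint_def)
      show ?thesis using sum.Union_disjoint[OF A B, of f] by simp
    qed
    ultimately show "(\<Sum>i\<in>?N. f i) = (\<Sum>i\<in>?N - \<Union>C. f i) + (\<Sum>S\<in>C. \<Sum>i\<in>S. f i)" by simp
  qed
  have f1: "(\<Sum>i\<in>?N - \<Union>C. a i) \<le> (\<Sum>i\<in>?N - \<Union>C. x i)"
  proof (rule sum_mono)
    fix i assume "i \<in> ?N - \<Union>C"
    then show "a i \<le> x i" using H free unfolding U_set_def by (auto simp: not_less)
  qed
  have f2: "(\<Sum>S\<in>C. \<Sum>i\<in>S. a i) \<le> (\<Sum>S\<in>C. \<Sum>i\<in>S. x i)"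
  proof (rule sum_mono)
    fix S assume "S \<in> C"
    then have "(\<Sum>i\<in>S. a i) \<le> v S" "v S \<le> (\<Sum>i\<in>S. x i)" using Cle xge CN by auto
    then show "(\<Sum>i\<in>S. a i) \<le> (\<Sum>i\<in>S. x i)" by linarith
  qed
  have ax: "(\<Sum>i\<in>?N. a i) \<le> (\<Sum>i\<in>?N. x i)" using split[of a] split[of x] f1 f2 by linarith
  have part: "partition_on ?N \<rho>" using rp by (simp add: partitions_def)
  have finR: "finite \<rho>" using part finN
    by (metis finite_UnionD partition_onD1)
  have "(\<Sum>i\<in>?N. x i) = (\<Sum>S\<in>\<rho>. \<Sum>i\<in>S. x i)"
  proof -
    have "?N = \<Union>\<rho>" using part by (simp add: partition_on_def)
    moreover have "(\<Sum>i\<in>\<Union>\<rho>. x i) = (\<Sum>S\<in>\<rho>. \<Sum>i\<in>S. x i)"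
    proof -
      have A: "\<forall>A\<in>\<rho>. finite A"
      proof
        fix A assume "A \<in> \<rho>"
        then have "A \<subseteq> ?N" using part by (auto simp: partition_on_def)
        then show "finite A" using finN by (rule finite_subset)
      qed
      have B: "\<forall>A\<in>\<rho>. \<forall>B\<in>\<rho>. A \<noteq> B \<longrightarrow> A \<inter> B = {}"
        using part by (simp add: partition_on_def disjoint_def)
      show ?thesis using sum.Union_disjoint[OF A B, of x] by simp
    qed
    ultimately show ?thesis by simp
  qed
  also have "\<dots> = (\<Sum>S\<in>\<rho>. v S)" using xeq by simp
  also have "\<dots> \<le> K_val n v"
  proof -
    have finP: "finite (partitions n)"
    proof -
      have "partitions n \<subseteq> Pow (Pow ?N)"
        by (auto simp: partitions_def partition_on_def)
      then show ?thesis using finN finite_subset by blast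
    qed
    show ?thesis unfolding K_val_def using finP rp by (intro Max_ge) auto
  qed
  finally show False using ax aK by linarith
qed

end
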